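(* Let $(C,\delta)$ be an $N$-codifferential graded coalgebra. Then: 1. $\mathrm{End}(C)$, with composition as product and differential $d(f)=\delta\circ f-(-1)^{\bar f}f\circ\delta$, is a $(2N-1)$-differential graded algebra. 2. $\mathrm{Coder}(C)\subseteq\mathrm{End}(C)$, with the graded commutator $[f,g]=f\circ g-(-1)^{\bar f\bar g}g\circ f$ and the same $d$, is a $(2N-1)$-differential graded Lie algebra.
   Context: All vector spaces are $\mathbb{Z}$-graded over a field $k$ of characteristic zero, and $\bar f$ denotes degree. A graded coalgebra is a graded vector space $C$ with a degree-zero coassociative map $\Delta:C\to C\otimes C$. A coderivation of $C$ is a linear map $\delta:C\to C$ with $\Delta\circ\delta=(1\otimes\delta+\delta\otimes1)\circ\Delta$, using Koszul signs. $\mathrm{Coder}(C)$ denotes the space of coderivations. An $N$-codifferential graded coalgebra is a pair $(C,\delta)$ where $C$ is a graded coalgebra and $\delta$ is a degree-one coderivation with $\delta^N=0$. $\mathrm{End}(C)$ is the graded space of graded linear endomorphisms of $C$. A $K$-differential graded algebra is a graded associative algebra with a degree-one map $d$ satisfying $d(ab)=d(a)b+(-1)^{\bar a}a\,d(b)$ and $d^K=0$. A $K$-differential graded Lie algebra is a graded Lie algebra with a degree-one map $d$ satisfying $d[a,b]=[da,b]+(-1)^{\bar a}[a,db]$ and $d^K=0$. *)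

theory Defs
  imports Main "HOL-Library.Poly_Mapping" "HOL-Library.Function_Algebras"
begin

text \<open>A graded vector space is modelled by a homogeneous basis: the space with basis
  the type 'i and degree function w on basis vectors is the space of finitely
  supported functions 'i \<Rightarrow>0 'k.  Every graded vector space over a field is isomorphic
  to one of this form.\<close>

definition smult :: "'k::field \<Rightarrow> ('i \<Rightarrow>\<^sub>0 'k) \<Rightarrow> ('i \<Rightarrow>\<^sub>0 'k)" where
  "smult c v = Poly_Mapping.map (\<lambda>a. c * a) v"

definition bvec :: "'i \<Rightarrow> ('i \<Rightarrow>\<^sub>0 'k::field)" where
  "bvec i = Poly_Mapping.single i 1"

definition hom :: "('i \<Rightarrow> int) \<Rightarrow> int \<Rightarrow> ('i \<Rightarrow>\<^sub>0 'k::field) set" where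
  "hom w n = {v. \<forall>i\<in>Poly_Mapping.keys v. w i = n}"

definition klinear :: "(('i \<Rightarrow>\<^sub>0 'k::field) \<Rightarrow> ('j \<Rightarrow>\<^sub>0 'k)) \<Rightarrow> bool" where
  "klinear f \<longleftrightarrow> (\<forall>x y. f (x + y) = f x + f y) \<and> (\<forall>c x. f (smult c x) = smult c (f x))"

definition lin_ext :: "('i \<Rightarrow> ('j \<Rightarrow>\<^sub>0 'k::field)) \<Rightarrow> ('i \<Rightarrow>\<^sub>0 'k) \<Rightarrow> ('j \<Rightarrow>\<^sub>0 'k)" where
  "lin_ext g v = (\<Sum>i\<in>Poly_Mapping.keys v. smult (Poly_Mapping.lookup v i) (g i))"

text \<open>Tensor product of vectors: the tensor product of the free spaces on 'i and 'j is the
  free space on 'i \<times> 'j, with degree of (a,b) the sum of the degrees.\<close>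
definition tensor :: "('i \<Rightarrow>\<^sub>0 'k::field) \<Rightarrow> ('j \<Rightarrow>\<^sub>0 'k) \<Rightarrow> ('i \<times> 'j \<Rightarrow>\<^sub>0 'k)" where
  "tensor x y = (\<Sum>a\<in>Poly_Mapping.keys x. \<Sum>b\<in>Poly_Mapping.keys y.
                    Poly_Mapping.single (a, b) (Poly_Mapping.lookup x a * Poly_Mapping.lookup y b))"

definition psign :: "int \<Rightarrow> 'k::field" where
  "psign p = (if even p then 1 else - 1)"

text \<open>Tensor product of linear maps with the Koszul sign:
  (f \<otimes> g)(x \<otimes> y) = (-1)^(deg g * deg x) f x \<otimes> g y, where q = deg g and w is the
  degree function on the basis of the first factor.\<close>
definition tmap :: "('i \<Rightarrow> int) \<Rightarrow> int \<Rightarrow> (('i \<Rightarrow>\<^sub>0 'k::field) \<Rightarrow> ('i2 \<Rightarrow>\<^sub>0 'k))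
     \<Rightarrow> (('j \<Rightarrow>\<^sub>0 'k) \<Rightarrow> ('j2 \<Rightarrow>\<^sub>0 'k)) \<Rightarrow> ('i \<times> 'j \<Rightarrow>\<^sub>0 'k) \<Rightarrow> ('i2 \<times> 'j2 \<Rightarrow>\<^sub>0 'k)" where
  "tmap w q f g = lin_ext (\<lambda>(a, b). smult (psign (q * w a)) (tensor (f (bvec a)) (g (bvec b))))"

definition assoc3 :: "('a \<times> ('b \<times> 'c) \<Rightarrow>\<^sub>0 'k::field) \<Rightarrow> (('a \<times> 'b) \<times> 'c \<Rightarrow>\<^sub>0 'k)" where
  "assoc3 = lin_ext (\<lambda>(a, (b, c)). bvec ((a, b), c))"

definition graded_coalgebra :: "('b \<Rightarrow> int) \<Rightarrow> (('b \<Rightarrow>\<^sub>0 'k::field) \<Rightarrow> ('b \<times> 'b \<Rightarrow>\<^sub>0 'k)) \<Rightarrow> bool" where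
  "graded_coalgebra bdeg Delta \<longleftrightarrow>
     klinear Delta \<and>
     (\<forall>n x. x \<in> hom bdeg n \<longrightarrow> Delta x \<in> hom (\<lambda>(a, b). bdeg a + bdeg b) n) \<and>
     (\<forall>x. tmap bdeg 0 Delta id (Delta x)
            = assoc3 (tmap bdeg 0 id Delta (Delta x)))"

definition EndH :: "('b \<Rightarrow> int) \<Rightarrow> int \<Rightarrow> (('b \<Rightarrow>\<^sub>0 'k::field) \<Rightarrow> ('b \<Rightarrow>\<^sub>0 'k)) set" where
  "EndH bdeg p = {f. klinear f \<and> (\<forall>n x. x \<in> hom bdeg n \<longrightarrow> f x \<in> hom bdeg (n + p))}"

text \<open>Homogeneous coderivations of degree p:
  Delta \<circ> f = (1 \<otimes> f + f \<otimes> 1) \<circ> Delta with Koszul signs.\<close>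
definition Coder :: "('b \<Rightarrow> int) \<Rightarrow> (('b \<Rightarrow>\<^sub>0 'k::field) \<Rightarrow> ('b \<times> 'b \<Rightarrow>\<^sub>0 'k)) \<Rightarrow> int
     \<Rightarrow> (('b \<Rightarrow>\<^sub>0 'k) \<Rightarrow> ('b \<Rightarrow>\<^sub>0 'k)) set" where
  "Coder bdeg Delta p = {f \<in> EndH bdeg p.
      \<forall>x. Delta (f x) = tmap bdeg p id f (Delta x) + tmap bdeg 0 f id (Delta x)}"

definition N_codifferential :: "('b \<Rightarrow> int) \<Rightarrow> (('b \<Rightarrow>\<^sub>0 'k::field) \<Rightarrow> ('b \<times> 'b \<Rightarrow>\<^sub>0 'k))
     \<Rightarrow> (('b \<Rightarrow>\<^sub>0 'k) \<Rightarrow> ('b \<Rightarrow>\<^sub>0 'k)) \<Rightarrow> nat \<Rightarrow> bool" where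
  "N_codifferential bdeg Delta delta N \<longleftrightarrow>
     graded_coalgebra bdeg Delta \<and> delta \<in> Coder bdeg Delta 1 \<and> (delta ^^ N) = (\<lambda>x. 0)"

definition End_scale :: "'k::field \<Rightarrow> (('b \<Rightarrow>\<^sub>0 'k) \<Rightarrow> ('b \<Rightarrow>\<^sub>0 'k)) \<Rightarrow> (('b \<Rightarrow>\<^sub>0 'k) \<Rightarrow> ('b \<Rightarrow>\<^sub>0 'k))" where
  "End_scale c f = (\<lambda>x. smult c (f x))"

definition End_d :: "(('b \<Rightarrow>\<^sub>0 'k::field) \<Rightarrow> ('b \<Rightarrow>\<^sub>0 'k)) \<Rightarrow> int
     \<Rightarrow> (('b \<Rightarrow>\<^sub>0 'k) \<Rightarrow> ('b \<Rightarrow>\<^sub>0 'k)) \<Rightarrow> (('b \<Rightarrow>\<^sub>0 'k) \<Rightarrow> ('b \<Rightarrow>\<^sub>0 'k))" where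
  "End_d delta p f = (\<lambda>x. delta (f x) - smult (psign p) (f (delta x)))"

definition End_bracket :: "int \<Rightarrow> int \<Rightarrow> (('b \<Rightarrow>\<^sub>0 'k::field) \<Rightarrow> ('b \<Rightarrow>\<^sub>0 'k))
     \<Rightarrow> (('b \<Rightarrow>\<^sub>0 'k) \<Rightarrow> ('b \<Rightarrow>\<^sub>0 'k)) \<Rightarrow> (('b \<Rightarrow>\<^sub>0 'k) \<Rightarrow> ('b \<Rightarrow>\<^sub>0 'k))" where
  "End_bracket p q f g = (\<lambda>x. f (g x) - smult (psign (p * q)) (g (f x)))"

text \<open>A graded vector space given by its homogeneous components H p (p \<in> int),
  sitting inside an ambient abelian group 'a with scalar action sc; the
  components are subspaces and their sum is direct.  All structure maps below are
  specified on homogeneous elements (they extend uniquely by linearity to the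
  direct sum); maps that depend on degrees take the degrees as arguments.\<close>
definition graded_space :: "('k::field \<Rightarrow> 'a::ab_group_add \<Rightarrow> 'a) \<Rightarrow> (int \<Rightarrow> 'a set) \<Rightarrow> bool" where
  "graded_space sc H \<longleftrightarrow>
     (\<forall>p. 0 \<in> H p \<and> (\<forall>a\<in>H p. \<forall>b\<in>H p. a + b \<in> H p) \<and> (\<forall>c. \<forall>a\<in>H p. sc c a \<in> H p)) \<and>
     (\<forall>p. \<forall>a\<in>H p. \<forall>b\<in>H p. \<forall>c c'.
         sc c (a + b) = sc c a + sc c b \<and> sc (c + c') a = sc c a + sc c' a \<and>
         sc (c * c') a = sc c (sc c' a) \<and> sc 1 a = a) \<and>
     (\<forall>S (v :: int \<Rightarrow> 'a). finite S \<longrightarrow> (\<forall>p\<in>S. v p \<in> H p) \<longrightarrow> sum v S = 0 \<longrightarrow> (\<forall>p\<in>S. v p = 0))"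

primrec diter :: "(int \<Rightarrow> 'a \<Rightarrow> 'a) \<Rightarrow> nat \<Rightarrow> int \<Rightarrow> 'a \<Rightarrow> 'a" where
  "diter d 0 p a = a"
| "diter d (Suc k) p a = d (p + int k) (diter d k p a)"

definition K_differential :: "('k::field \<Rightarrow> 'a::ab_group_add \<Rightarrow> 'a) \<Rightarrow> (int \<Rightarrow> 'a set)
     \<Rightarrow> (int \<Rightarrow> 'a \<Rightarrow> 'a) \<Rightarrow> nat \<Rightarrow> bool" where
  "K_differential sc H d K \<longleftrightarrow>
     (\<forall>p. \<forall>a\<in>H p. d p a \<in> H (p + 1)) \<and>
     (\<forall>p. \<forall>a\<in>H p. \<forall>b\<in>H p. d p (a + b) = d p a + d p b) \<and>
     (\<forall>p c. \<forall>a\<in>H p. d p (sc c a) = sc c (d p a)) \<and>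
     (\<forall>p. \<forall>a\<in>H p. diter d K p a = 0)"

definition K_dga :: "('k::field \<Rightarrow> 'a::ab_group_add \<Rightarrow> 'a) \<Rightarrow> (int \<Rightarrow> 'a set)
     \<Rightarrow> ('a \<Rightarrow> 'a \<Rightarrow> 'a) \<Rightarrow> (int \<Rightarrow> 'a \<Rightarrow> 'a) \<Rightarrow> nat \<Rightarrow> bool" where
  "K_dga sc H m d K \<longleftrightarrow>
     graded_space sc H \<and>
     (\<forall>p q. \<forall>a\<in>H p. \<forall>b\<in>H q. m a b \<in> H (p + q)) \<and>
     (\<forall>p q. \<forall>a\<in>H p. \<forall>a'\<in>H p. \<forall>b\<in>H q. m (a + a') b = m a b + m a' b) \<and>
     (\<forall>p q. \<forall>a\<in>H p. \<forall>b\<in>H q. \<forall>b'\<in>H q. m a (b + b') = m a b + m a b') \<and>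
     (\<forall>p q c. \<forall>a\<in>H p. \<forall>b\<in>H q. m (sc c a) b = sc c (m a b) \<and> m a (sc c b) = sc c (m a b)) \<and>
     (\<forall>p q r. \<forall>a\<in>H p. \<forall>b\<in>H q. \<forall>e\<in>H r. m (m a b) e = m a (m b e)) \<and>
     K_differential sc H d K \<and>
     (\<forall>p q. \<forall>a\<in>H p. \<forall>b\<in>H q.
        d (p + q) (m a b) = m (d p a) b + sc (psign p) (m a (d q b)))"

definition K_dgla :: "('k::field \<Rightarrow> 'a::ab_group_add \<Rightarrow> 'a) \<Rightarrow> (int \<Rightarrow> 'a set)
     \<Rightarrow> (int \<Rightarrow> int \<Rightarrow> 'a \<Rightarrow> 'a \<Rightarrow> 'a) \<Rightarrow> (int \<Rightarrow> 'a \<Rightarrow> 'a) \<Rightarrow> nat \<Rightarrow> bool" where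
  "K_dgla sc H br d K \<longleftrightarrow>
     graded_space sc H \<and>
     (\<forall>p q. \<forall>a\<in>H p. \<forall>b\<in>H q. br p q a b \<in> H (p + q)) \<and>
     (\<forall>p q. \<forall>a\<in>H p. \<forall>a'\<in>H p. \<forall>b\<in>H q. br p q (a + a') b = br p q a b + br p q a' b) \<and>
     (\<forall>p q. \<forall>a\<in>H p. \<forall>b\<in>H q. \<forall>b'\<in>H q. br p q a (b + b') = br p q a b + br p q a b') \<and>
     (\<forall>p q c. \<forall>a\<in>H p. \<forall>b\<in>H q.
        br p q (sc c a) b = sc c (br p q a b) \<and> br p q a (sc c b) = sc c (br p q a b)) \<and>
     (\<forall>p q. \<forall>a\<in>H p. \<forall>b\<in>H q. br p q a b = - sc (psign (p * q)) (br q p b a)) \<and>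
     (\<forall>p q r. \<forall>a\<in>H p. \<forall>b\<in>H q. \<forall>e\<in>H r.
        br p (q + r) a (br q r b e)
          = br (p + q) r (br p q a b) e + sc (psign (p * q)) (br q (p + r) b (br p r a e))) \<and>
     K_differential sc H d K \<and>
     (\<forall>p q. \<forall>a\<in>H p. \<forall>b\<in>H q.
        d (p + q) (br p q a b) = br (p + 1) q (d p a) b + sc (psign p) (br p (q + 1) a (d q b)))"

end

theory Submission imports Defs begin

lemma lookup_smult[simp]: "Poly_Mapping.lookup (smult c v) i = c * Poly_Mapping.lookup v i"
  by (simp add: smult_def map.rep_eq when_def)

lemma smult_add: "smult c (u + v) = smult c u + smult c v"
  by (rule poly_mapping_eqI) (simp add: lookup_add algebra_simps)
lemma smult_diff: "smult c (u - v) = smult c u - smult c v"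
  by (rule poly_mapping_eqI) (simp add: lookup_minus algebra_simps)
lemma smult_uminus: "smult c (- v) = - smult c v"
  by (rule poly_mapping_eqI) (simp)
lemma smult_zero[simp]: "smult c 0 = 0"
  by (rule poly_mapping_eqI) (simp)
lemma smult_0[simp]: "smult 0 v = 0"
  by (rule poly_mapping_eqI) (simp)
lemma smult_1[simp]: "smult 1 v = v"
  by (rule poly_mapping_eqI) (simp)
lemma smult_smult[simp]: "smult c (smult d v) = smult (c * d) v"
  by (rule poly_mapping_eqI) (simp)
lemma smult_add_left: "smult (c + d) v = smult c v + smult d v"
  by (rule poly_mapping_eqI) (simp add: lookup_add algebra_simps)
lemma smult_sum: "smult c (sum f S) = (\<Sum>i\<in>S. smult c (f i))"
  by (rule poly_mapping_eqI) (simp add: lookup_sum sum_distrib_left)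

lemma psign_add: "psign (a + b) = (psign a * psign b :: 'k::field)"
  by (simp add: psign_def)
lemma psign_sq: "psign a * psign a = (1 :: 'k::field)"
  by (simp add: psign_def)

lemma klinearD:
  assumes "klinear f"
  shows "f (x + y) = f x + f y" "f (smult c x) = smult c (f x)" "f 0 = 0"
    "f (x - y) = f x - f y" "f (- x) = - f x" "f (sum g S) = (\<Sum>i\<in>S. f (g i))"
proof -
  show a: "\<And>x y. f (x + y) = f x + f y" using assms by (simp add: klinear_def)
  show s: "\<And>c x. f (smult c x) = smult c (f x)" using assms by (simp add: klinear_def)
  show z: "f 0 = 0" using s[of 0 0] by simp
  have n: "\<And>x. f (- x) = - f x"
  proof -
    fix x have "f (-x) = f (smult (-1) x)" by (rule arg_cong[where f=f], rule poly_mapping_eqI, simp)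
    also have "\<dots> = - f x" by (simp add: s, rule poly_mapping_eqI, simp)
    finally show "f (- x) = - f x" .
  qed
  show "f (- x) = - f x" by (rule n)
  show "f (x - y) = f x - f y" using a[of x "-y"] n[of y] by simp
  show "f (sum g S) = (\<Sum>i\<in>S. f (g i))"
    by (induction S rule: infinite_finite_induct) (auto simp: z a)
qed

lemma vec_decomp: "v = (\<Sum>i\<in>Poly_Mapping.keys v. smult (Poly_Mapping.lookup v i) (bvec i))"
proof (rule poly_mapping_eqI)
  fix j
  have "(\<Sum>i\<in>Poly_Mapping.keys v. Poly_Mapping.lookup v i * Poly_Mapping.lookup (bvec i) j)
        = (\<Sum>i\<in>Poly_Mapping.keys v. if i = j then Poly_Mapping.lookup v i else 0)"
    by (rule sum.cong) (auto simp: bvec_def lookup_single when_def)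
  also have "\<dots> = Poly_Mapping.lookup v j" by (simp add: in_keys_iff)
  finally show "Poly_Mapping.lookup v j = Poly_Mapping.lookup (\<Sum>i\<in>Poly_Mapping.keys v. smult (Poly_Mapping.lookup v i) (bvec i)) j"
    by (simp add: lookup_sum)
qed

lemma klinear_ext:
  assumes "klinear f" "klinear g" "\<And>i. f (bvec i) = g (bvec i)"
  shows "f v = g v"
  apply (subst (1 2) vec_decomp[of v])
  using assms by (simp add: klinearD)


lemma hom_zero[simp]: "0 \<in> hom w n" by (simp add: hom_def)
lemma hom_add: "u \<in> hom w n \<Longrightarrow> v \<in> hom w n \<Longrightarrow> u + v \<in> hom w n"
proof -
  assume a: "u \<in> hom w n" "v \<in> hom w n"
  have "Poly_Mapping.keys (u + v) \<subseteq> Poly_Mapping.keys u \<union> Poly_Mapping.keys v"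
    by (rule keys_add)
  then show ?thesis using a by (auto simp: hom_def)
qed
lemma hom_smult: "u \<in> hom w n \<Longrightarrow> smult c u \<in> hom w n"
  by (auto simp: hom_def in_keys_iff)
lemma hom_uminus: "u \<in> hom w n \<Longrightarrow> - u \<in> hom w n"
  by (auto simp: hom_def in_keys_iff)
lemma hom_diff: "u \<in> hom w n \<Longrightarrow> v \<in> hom w n \<Longrightarrow> u - v \<in> hom w n"
  using hom_add[of u w n "-v"] hom_uminus by fastforce
lemma bvec_hom: "bvec i \<in> hom w (w i)"
  by (simp add: hom_def bvec_def)

lemma klinear_comp: "klinear f \<Longrightarrow> klinear g \<Longrightarrow> klinear (\<lambda>x. f (g x))"
  by (simp add: klinear_def)
lemma klinear_zero: "klinear (\<lambda>x. 0)" by (simp add: klinear_def)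
lemma klinear_id: "klinear (\<lambda>x. x)" by (simp add: klinear_def)
lemma klinear_add: "klinear f \<Longrightarrow> klinear g \<Longrightarrow> klinear (\<lambda>x. f x + g x)"
  by (simp add: klinear_def smult_add)
lemma klinear_diff: "klinear f \<Longrightarrow> klinear g \<Longrightarrow> klinear (\<lambda>x. f x - g x)"
  by (simp add: klinear_def smult_diff)
lemma klinear_scale: "klinear f \<Longrightarrow> klinear (\<lambda>x. smult c (f x))"
  by (simp add: klinear_def smult_add mult.commute)

lemma EndH_comp:
  fixes f g :: "('i \<Rightarrow>\<^sub>0 'k::field) \<Rightarrow> ('i \<Rightarrow>\<^sub>0 'k)"
  shows "f \<in> EndH w p \<Longrightarrow> g \<in> EndH w q \<Longrightarrow> (\<lambda>x. f (g x)) \<in> EndH w (p + q)"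
proof -
  assume f: "f \<in> EndH w p" and g: "g \<in> EndH w q"
  have "klinear (\<lambda>x. f (g x))" using f g by (simp add: EndH_def klinear_comp)
  moreover have "\<forall>n (x::'i \<Rightarrow>\<^sub>0 'k). x \<in> hom w n \<longrightarrow> f (g x) \<in> hom w (n + (p + q))"
  proof (intro allI impI)
    fix n and x :: "'i \<Rightarrow>\<^sub>0 'k" assume "x \<in> hom w n"
    then have "g x \<in> hom w (n + q)" using g by (simp add: EndH_def)
    then have "f (g x) \<in> hom w (n + q + p)" using f by (simp add: EndH_def)
    then show "f (g x) \<in> hom w (n + (p + q))" by (simp add: ac_simps)
  qed
  ultimately show ?thesis by (simp add: EndH_def)
qed
lemma EndH_zero: "(\<lambda>x. 0) \<in> EndH w p"
  by (simp add: EndH_def klinear_zero)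
lemma EndH_add: "f \<in> EndH w p \<Longrightarrow> g \<in> EndH w p \<Longrightarrow> (\<lambda>x. f x + g x) \<in> EndH w p"
  by (simp add: EndH_def klinear_add hom_add)
lemma EndH_diff: "f \<in> EndH w p \<Longrightarrow> g \<in> EndH w p \<Longrightarrow> (\<lambda>x. f x - g x) \<in> EndH w p"
  by (simp add: EndH_def klinear_diff hom_diff)
lemma EndH_scale: "f \<in> EndH w p \<Longrightarrow> (\<lambda>x. smult c (f x)) \<in> EndH w p"
  by (simp add: EndH_def klinear_scale hom_smult)
lemma EndH_lin: "f \<in> EndH w p \<Longrightarrow> klinear f" by (simp add: EndH_def)
lemma EndH_hom: "f \<in> EndH w p \<Longrightarrow> x \<in> hom w n \<Longrightarrow> f x \<in> hom w (n + p)" by (simp add: EndH_def)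

lemma hom_direct:
  fixes u :: "int \<Rightarrow> ('i \<Rightarrow>\<^sub>0 'k::field)"
  assumes fin: "finite S" and h: "\<And>p. p \<in> S \<Longrightarrow> u p \<in> hom w (n + p)" and s: "sum u S = 0"
    and pS: "p \<in> S"
  shows "u p = 0"
proof (rule poly_mapping_eqI)
  fix j
  show "Poly_Mapping.lookup (u p) j = Poly_Mapping.lookup 0 j"
  proof (rule ccontr)
    assume ne: "Poly_Mapping.lookup (u p) j \<noteq> Poly_Mapping.lookup 0 j"
    then have wj: "w j = n + p" using h[OF pS] by (auto simp: hom_def in_keys_iff)
    have oth: "Poly_Mapping.lookup (u p') j = 0" if "p' \<in> S - {p}" for p'
    proof (rule ccontr)
      assume "Poly_Mapping.lookup (u p') j \<noteq> 0"
      then have "w j = n + p'" using h[of p'] that by (auto simp: hom_def in_keys_iff)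
      with wj that show False by auto
    qed
    have "0 = Poly_Mapping.lookup (sum u S) j" by (simp add: s)
    also have "\<dots> = Poly_Mapping.lookup (u p) j + (\<Sum>p'\<in>S - {p}. Poly_Mapping.lookup (u p') j)"
      by (simp add: lookup_sum lookup_add sum.remove[OF fin pS])
    also have "\<dots> = Poly_Mapping.lookup (u p) j" using oth by simp
    finally show False using ne by simp
  qed
qed

lemma fun_sum_apply': "(sum v S) x = (\<Sum>p\<in>S. v p x)"
proof (induction S rule: infinite_finite_induct)
  case (insert a F)
  have e: "sum v (insert a F) = v a + sum v F" using insert(1,2) by (rule sum.insert)
  show ?case unfolding e plus_fun_def using insert by simp
qed auto

lemma EndH_direct:
  assumes fin: "finite S" and h: "\<forall>p\<in>S. v p \<in> EndH w p" and s: "sum v S = 0" and pS: "p \<in> S"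
  shows "v p = 0"
proof -
  have b: "v p (bvec i) = 0" for i
  proof -
    have "(\<Sum>p\<in>S. v p (bvec i)) = sum v S (bvec i)" by (rule fun_sum_apply'[symmetric])
    also have "\<dots> = 0" unfolding s by (simp only: zero_fun_def)
    finally have z: "(\<Sum>p\<in>S. v p (bvec i)) = 0" .
    have hh: "v p' (bvec i) \<in> hom w (w i + p')" if "p' \<in> S" for p'
      using EndH_hom[OF bspec[OF h that] bvec_hom] .
    show ?thesis
      using hom_direct[OF fin, of "\<lambda>p. v p (bvec i)" w "w i", OF hh z pS] .
  qed
  have "klinear (v p)" using EndH_lin[OF bspec[OF h pS]] .
  then have "v p x = 0" for x using klinear_ext[of "v p" "\<lambda>x. 0", OF _ klinear_zero] b by simp
  then show ?thesis by (simp add: fun_eq_iff)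
qed


lemma lookup_tensor: "Poly_Mapping.lookup (tensor x y) (a, b) = Poly_Mapping.lookup x a * Poly_Mapping.lookup y b"
proof -
  have "Poly_Mapping.lookup (tensor x y) (a, b) =
      (\<Sum>a'\<in>Poly_Mapping.keys x. \<Sum>b'\<in>Poly_Mapping.keys y.
          if a' = a \<and> b' = b then Poly_Mapping.lookup x a' * Poly_Mapping.lookup y b' else 0)"
    by (simp add: tensor_def lookup_sum lookup_single when_def)
  also have "\<dots> = (\<Sum>a'\<in>Poly_Mapping.keys x.
          if a' = a then Poly_Mapping.lookup x a' * Poly_Mapping.lookup y b else 0)"
  proof (rule sum.cong)
    fix a' assume "a' \<in> Poly_Mapping.keys x"
    have "(\<Sum>b'\<in>Poly_Mapping.keys y.
          if a' = a \<and> b' = b then Poly_Mapping.lookup x a' * Poly_Mapping.lookup y b' else 0)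
        = (\<Sum>b'\<in>Poly_Mapping.keys y. if b' = b then (if a' = a then Poly_Mapping.lookup x a' * Poly_Mapping.lookup y b' else 0) else 0)"
      by (rule sum.cong) auto
    also have "\<dots> = (if a' = a then Poly_Mapping.lookup x a' * Poly_Mapping.lookup y b else 0)"
      by (simp add: sum.delta in_keys_iff)
    finally show "(\<Sum>b'\<in>Poly_Mapping.keys y.
          if a' = a \<and> b' = b then Poly_Mapping.lookup x a' * Poly_Mapping.lookup y b' else 0) =
       (if a' = a then Poly_Mapping.lookup x a' * Poly_Mapping.lookup y b else 0)" .
  qed simp
  also have "\<dots> = Poly_Mapping.lookup x a * Poly_Mapping.lookup y b"
    by (auto simp: in_keys_iff)
  finally show ?thesis .
qed

lemma lookup_tensor': "Poly_Mapping.lookup (tensor x y) ab = Poly_Mapping.lookup x (fst ab) * Poly_Mapping.lookup y (snd ab)"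
  using lookup_tensor[of x y "fst ab" "snd ab"] by simp

lemma klinear_tensor1: "klinear (\<lambda>x. tensor x y)"
  unfolding klinear_def
  by (auto intro!: poly_mapping_eqI simp: lookup_tensor' lookup_add algebra_simps)
lemma klinear_tensor2: "klinear (\<lambda>y. tensor x y)"
  unfolding klinear_def
  by (auto intro!: poly_mapping_eqI simp: lookup_tensor' lookup_add algebra_simps)
lemma tensor_bvec: "tensor (bvec a) (bvec b) = bvec (a, b)"
  by (rule poly_mapping_eqI) (auto simp: lookup_tensor' bvec_def lookup_single when_def)

lemma lin_ext_superset:
  assumes "finite K" "Poly_Mapping.keys v \<subseteq> K"
  shows "lin_ext g v = (\<Sum>i\<in>K. smult (Poly_Mapping.lookup v i) (g i))"
  unfolding lin_ext_def
  by (rule sum.mono_neutral_left) (use assms in \<open>auto simp: in_keys_iff\<close>)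

lemma klinear_lin_ext: "klinear (lin_ext g)"
  unfolding klinear_def
proof (intro conjI allI)
  fix x y :: "'a \<Rightarrow>\<^sub>0 'b"
  let ?K = "Poly_Mapping.keys x \<union> Poly_Mapping.keys y"
  have "lin_ext g (x + y) = (\<Sum>i\<in>?K. smult (Poly_Mapping.lookup (x + y) i) (g i))"
    by (rule lin_ext_superset) (auto dest: set_mp[OF keys_add])
  also have "\<dots> = (\<Sum>i\<in>?K. smult (Poly_Mapping.lookup x i) (g i)) + (\<Sum>i\<in>?K. smult (Poly_Mapping.lookup y i) (g i))"
    by (simp add: lookup_add smult_add_left sum.distrib)
  also have "\<dots> = lin_ext g x + lin_ext g y"
    using lin_ext_superset[of ?K x g] lin_ext_superset[of ?K y g] by simp
  finally show "lin_ext g (x + y) = lin_ext g x + lin_ext g y" .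
next
  fix c and x :: "'a \<Rightarrow>\<^sub>0 'b"
  have "lin_ext g (smult c x) = (\<Sum>i\<in>Poly_Mapping.keys x. smult (Poly_Mapping.lookup (smult c x) i) (g i))"
    by (rule lin_ext_superset) (auto simp: in_keys_iff)
  also have "\<dots> = smult c (lin_ext g x)"
    by (simp add: lin_ext_def smult_sum)
  finally show "lin_ext g (smult c x) = smult c (lin_ext g x)" .
qed

lemma lin_ext_bvec: "lin_ext g (bvec i) = g i"
  by (simp add: lin_ext_def bvec_def)

lemma klinear_tmap: "klinear (tmap w q F G)"
  by (simp add: tmap_def klinear_lin_ext)

lemma tmap_bvec: "tmap w q F G (bvec (a, b)) = smult (psign (q * w a)) (tensor (F (bvec a)) (G (bvec b)))"
  by (simp add: tmap_def lin_ext_bvec)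

lemma tmap_tensor_bvec:
  assumes G: "klinear G"
  shows "tmap w q F G (tensor (bvec a) v) = smult (psign (q * w a)) (tensor (F (bvec a)) (G v))"
proof (rule klinear_ext[of "\<lambda>v. tmap w q F G (tensor (bvec a) v)" "\<lambda>v. smult (psign (q * w a)) (tensor (F (bvec a)) (G v))"])
  show "klinear (\<lambda>v. tmap w q F G (tensor (bvec a) v))"
    by (rule klinear_comp[OF klinear_tmap klinear_tensor2])
  show "klinear (\<lambda>v. smult (psign (q * w a)) (tensor (F (bvec a)) (G v)))"
    by (rule klinear_scale, rule klinear_comp[OF klinear_tensor2 G])
  fix i show "tmap w q F G (tensor (bvec a) (bvec i)) = smult (psign (q * w a)) (tensor (F (bvec a)) (G (bvec i)))"
    by (simp add: tensor_bvec tmap_bvec)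
qed

lemma tmap_tensor:
  assumes F: "klinear F" and G: "klinear G" and u: "u \<in> hom w n"
  shows "tmap w q F G (tensor u v) = smult (psign (q * n)) (tensor (F u) (G v))"
proof -
  let ?K = "Poly_Mapping.keys u"
  have "tmap w q F G (tensor u v) = tmap w q F G (tensor (\<Sum>a\<in>?K. smult (Poly_Mapping.lookup u a) (bvec a)) v)"
    by (subst vec_decomp[of u]) simp
  also have "\<dots> = (\<Sum>a\<in>?K. smult (Poly_Mapping.lookup u a) (tmap w q F G (tensor (bvec a) v)))"
    by (simp add: klinearD[OF klinear_tensor1] klinearD[OF klinear_tmap])
  also have "\<dots> = (\<Sum>a\<in>?K. smult (Poly_Mapping.lookup u a) (smult (psign (q * n)) (tensor (F (bvec a)) (G v))))"
    by (rule sum.cong) (use u in \<open>auto simp: tmap_tensor_bvec[OF G] hom_def\<close>)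
  also have "\<dots> = smult (psign (q * n)) (tensor (F (\<Sum>a\<in>?K. smult (Poly_Mapping.lookup u a) (bvec a))) (G v))"
    by (simp add: klinearD[OF F] klinearD[OF klinear_tensor1] smult_sum mult.commute)
  also have "\<dots> = smult (psign (q * n)) (tensor (F u) (G v))"
    by (subst (2) vec_decomp[of u]) simp
  finally show ?thesis .
qed


lemma psign_mult_add: "psign (p * (a + q)) = (psign (p * a) * psign (p * q) :: 'k::field)"
  by (simp add: distrib_left psign_add)

lemma tmap_comp1:
  fixes f g :: "('b \<Rightarrow>\<^sub>0 'k::field) \<Rightarrow> ('b \<Rightarrow>\<^sub>0 'k)" and w :: "'b \<Rightarrow> int" and z :: "'b \<times> 'b \<Rightarrow>\<^sub>0 'k"
  assumes f: "klinear f" and g: "klinear g"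
  shows "tmap w p id f (tmap w q id g z) = tmap w (p + q) id (\<lambda>x. f (g x)) z"
proof (rule klinear_ext[of "\<lambda>z. tmap w p id f (tmap w q id g z)"])
  show "klinear (\<lambda>z. tmap w p id f (tmap w q id g z))" by (rule klinear_comp[OF klinear_tmap klinear_tmap])
  show "klinear (tmap w (p + q) id (\<lambda>x. f (g x)))" by (rule klinear_tmap)
  fix i :: "'b \<times> 'b"
  obtain a b where i: "i = (a, b)" by (cases i)
  show "tmap w p id f (tmap w q id g (bvec i)) = tmap w (p + q) id (\<lambda>x. f (g x)) (bvec i)"
    unfolding i tmap_bvec
    by (simp add: klinearD[OF klinear_tmap] tmap_tensor[OF klinear_id f bvec_hom, simplified id_def[symmetric]]
        psign_def even_add even_mult_iff distrib_left distrib_right)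
qed


lemma tmap_comp2:
  fixes f g :: "('b \<Rightarrow>\<^sub>0 'k::field) \<Rightarrow> ('b \<Rightarrow>\<^sub>0 'k)" and w :: "'b \<Rightarrow> int" and z :: "'b \<times> 'b \<Rightarrow>\<^sub>0 'k"
  assumes f: "f \<in> EndH w p" and g: "g \<in> EndH w q"
  shows "tmap w 0 f id (tmap w 0 g id z) = tmap w 0 (\<lambda>x. f (g x)) id z"
proof (rule klinear_ext[of "\<lambda>z. tmap w 0 f id (tmap w 0 g id z)"])
  show "klinear (\<lambda>z. tmap w 0 f id (tmap w 0 g id z))" by (rule klinear_comp[OF klinear_tmap klinear_tmap])
  show "klinear (tmap w 0 (\<lambda>x. f (g x)) id)" by (rule klinear_tmap)
  fix i :: "'b \<times> 'b"
  obtain a b where i: "i = (a, b)" by (cases i)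
  have gh: "g (bvec a) \<in> hom w (w a + q)" using EndH_hom[OF g bvec_hom] .
  show "tmap w 0 f id (tmap w 0 g id (bvec i)) = tmap w 0 (\<lambda>x. f (g x)) id (bvec i)"
    unfolding i tmap_bvec
    using tmap_tensor[OF EndH_lin[OF f] klinear_id gh, where q=0 and v="bvec b", simplified id_def[symmetric]]
    by (simp add: psign_def)
qed

lemma tmap_comp3:
  fixes f g :: "('b \<Rightarrow>\<^sub>0 'k::field) \<Rightarrow> ('b \<Rightarrow>\<^sub>0 'k)" and w :: "'b \<Rightarrow> int" and z :: "'b \<times> 'b \<Rightarrow>\<^sub>0 'k"
  assumes f: "f \<in> EndH w p" and g: "g \<in> EndH w q"
  shows "tmap w p id f (tmap w 0 g id z) = smult (psign (p * q)) (tmap w 0 g id (tmap w p id f z))"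
proof (rule klinear_ext[of "\<lambda>z. tmap w p id f (tmap w 0 g id z)"])
  show "klinear (\<lambda>z. tmap w p id f (tmap w 0 g id z))" by (rule klinear_comp[OF klinear_tmap klinear_tmap])
  show "klinear (\<lambda>z. smult (psign (p * q)) (tmap w 0 g id (tmap w p id f z)))"
    by (rule klinear_scale, rule klinear_comp[OF klinear_tmap klinear_tmap])
  fix i :: "'b \<times> 'b"
  obtain a b where i: "i = (a, b)" by (cases i)
  have gh: "g (bvec a) \<in> hom w (w a + q)" using EndH_hom[OF g bvec_hom] .
  show "tmap w p id f (tmap w 0 g id (bvec i)) = smult (psign (p * q)) (tmap w 0 g id (tmap w p id f (bvec i)))"
    unfolding i tmap_bvec
    using tmap_tensor[OF klinear_id EndH_lin[OF f] gh, where q=p and v="bvec b", simplified id_def[symmetric]]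
      tmap_tensor[OF EndH_lin[OF g] klinear_id bvec_hom, where q=0 and v="f (bvec b)", simplified id_def[symmetric]]
    by (simp add: klinearD[OF klinear_tmap] psign_def even_add even_mult_iff distrib_left distrib_right)
qed

lemma tmap_comp4:
  fixes f g :: "('b \<Rightarrow>\<^sub>0 'k::field) \<Rightarrow> ('b \<Rightarrow>\<^sub>0 'k)" and w :: "'b \<Rightarrow> int" and z :: "'b \<times> 'b \<Rightarrow>\<^sub>0 'k"
  assumes f: "f \<in> EndH w p" and g: "g \<in> EndH w q"
  shows "tmap w 0 f id (tmap w q id g z) = smult (psign (p * q)) (tmap w q id g (tmap w 0 f id z))"
proof (rule klinear_ext[of "\<lambda>z. tmap w 0 f id (tmap w q id g z)"])
  show "klinear (\<lambda>z. tmap w 0 f id (tmap w q id g z))" by (rule klinear_comp[OF klinear_tmap klinear_tmap])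
  show "klinear (\<lambda>z. smult (psign (p * q)) (tmap w q id g (tmap w 0 f id z)))"
    by (rule klinear_scale, rule klinear_comp[OF klinear_tmap klinear_tmap])
  fix i :: "'b \<times> 'b"
  obtain a b where i: "i = (a, b)" by (cases i)
  have fh: "f (bvec a) \<in> hom w (w a + p)" using EndH_hom[OF f bvec_hom] .
  show "tmap w 0 f id (tmap w q id g (bvec i)) = smult (psign (p * q)) (tmap w q id g (tmap w 0 f id (bvec i)))"
    unfolding i tmap_bvec
    using tmap_tensor[OF klinear_id EndH_lin[OF g] fh, where q=q and v="bvec b", simplified id_def[symmetric]]
      tmap_tensor[OF EndH_lin[OF f] klinear_id bvec_hom, where q=0 and v="g (bvec b)", simplified id_def[symmetric]]
    by (simp add: klinearD[OF klinear_tmap] psign_def even_add even_mult_iff distrib_left distrib_right)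
qed

lemma tmap_lin2:
  fixes f g :: "('b \<Rightarrow>\<^sub>0 'k::field) \<Rightarrow> ('b \<Rightarrow>\<^sub>0 'k)" and w :: "'b \<Rightarrow> int" and z :: "'b \<times> 'b \<Rightarrow>\<^sub>0 'k"
  assumes f: "klinear f" and g: "klinear g"
  shows "tmap w p id (\<lambda>x. f x - smult c (g x)) z = tmap w p id f z - smult c (tmap w p id g z)"
proof (rule klinear_ext[of "tmap w p id (\<lambda>x. f x - smult c (g x))"])
  show "klinear (tmap w p id (\<lambda>x. f x - smult c (g x)))" by (rule klinear_tmap)
  show "klinear (\<lambda>z. tmap w p id f z - smult c (tmap w p id g z))"
    by (rule klinear_diff[OF klinear_tmap klinear_scale[OF klinear_tmap]])
  fix i :: "'b \<times> 'b"
  obtain a b where i: "i = (a, b)" by (cases i)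
  show "tmap w p id (\<lambda>x. f x - smult c (g x)) (bvec i) = tmap w p id f (bvec i) - smult c (tmap w p id g (bvec i))"
    unfolding i tmap_bvec
    by (simp add: klinearD[OF klinear_tensor2] smult_diff mult.commute)
qed

lemma tmap_lin1:
  fixes f g :: "('b \<Rightarrow>\<^sub>0 'k::field) \<Rightarrow> ('b \<Rightarrow>\<^sub>0 'k)" and w :: "'b \<Rightarrow> int" and z :: "'b \<times> 'b \<Rightarrow>\<^sub>0 'k"
  assumes f: "klinear f" and g: "klinear g"
  shows "tmap w 0 (\<lambda>x. f x - smult c (g x)) id z = tmap w 0 f id z - smult c (tmap w 0 g id z)"
proof (rule klinear_ext[of "tmap w 0 (\<lambda>x. f x - smult c (g x)) id"])
  show "klinear (tmap w 0 (\<lambda>x. f x - smult c (g x)) id)" by (rule klinear_tmap)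
  show "klinear (\<lambda>z. tmap w 0 f id z - smult c (tmap w 0 g id z))"
    by (rule klinear_diff[OF klinear_tmap klinear_scale[OF klinear_tmap]])
  fix i :: "'b \<times> 'b"
  obtain a b where i: "i = (a, b)" by (cases i)
  show "tmap w 0 (\<lambda>x. f x - smult c (g x)) id (bvec i) = tmap w 0 f id (bvec i) - smult c (tmap w 0 g id (bvec i))"
    unfolding i tmap_bvec
    by (simp add: klinearD[OF klinear_tensor1] smult_diff mult.commute)
qed


lemma tmap_R_gen:
  fixes w :: "'b \<Rightarrow> int" and z :: "'b \<times> 'b \<Rightarrow>\<^sub>0 'k::field"
  assumes "\<And>b. G (bvec b) = G1 (bvec b) + smult c (G2 (bvec b))"
  shows "tmap w p id G z = tmap w p id G1 z + smult c (tmap w p id G2 z)"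
proof (rule klinear_ext[of "tmap w p id G"])
  show "klinear (tmap w p id G)" by (rule klinear_tmap)
  show "klinear (\<lambda>z. tmap w p id G1 z + smult c (tmap w p id G2 z))"
    by (rule klinear_add[OF klinear_tmap klinear_scale[OF klinear_tmap]])
  fix i :: "'b \<times> 'b"
  obtain a b where i: "i = (a, b)" by (cases i)
  show "tmap w p id G (bvec i) = tmap w p id G1 (bvec i) + smult c (tmap w p id G2 (bvec i))"
    unfolding i tmap_bvec assms
    by (simp add: klinearD[OF klinear_tensor2] smult_add mult.commute)
qed

lemma tmap_L_gen:
  fixes w :: "'b \<Rightarrow> int" and z :: "'b \<times> 'b \<Rightarrow>\<^sub>0 'k::field"
  assumes "\<And>b. G (bvec b) = G1 (bvec b) + smult c (G2 (bvec b))"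
  shows "tmap w 0 G id z = tmap w 0 G1 id z + smult c (tmap w 0 G2 id z)"
proof (rule klinear_ext[of "tmap w 0 G id"])
  show "klinear (tmap w 0 G id)" by (rule klinear_tmap)
  show "klinear (\<lambda>z. tmap w 0 G1 id z + smult c (tmap w 0 G2 id z))"
    by (rule klinear_add[OF klinear_tmap klinear_scale[OF klinear_tmap]])
  fix i :: "'b \<times> 'b"
  obtain a b where i: "i = (a, b)" by (cases i)
  show "tmap w 0 G id (bvec i) = tmap w 0 G1 id (bvec i) + smult c (tmap w 0 G2 id (bvec i))"
    unfolding i tmap_bvec assms
    by (simp add: klinearD[OF klinear_tensor1] smult_add mult.commute)
qed

lemma tmap_R_zero:
  fixes w :: "'b \<Rightarrow> int" and z :: "'b \<times> 'b \<Rightarrow>\<^sub>0 'k::field"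
  shows "tmap w p id (\<lambda>x. 0) z = 0"
  using tmap_R_gen[of "\<lambda>x. 0" "\<lambda>x. 0" 1 "\<lambda>x. 0" w p z] by simp

lemma tmap_L_zero:
  fixes w :: "'b \<Rightarrow> int" and z :: "'b \<times> 'b \<Rightarrow>\<^sub>0 'k::field"
  shows "tmap w 0 (\<lambda>x. 0) id z = 0"
  using tmap_L_gen[of "\<lambda>x. 0" "\<lambda>x. 0" 1 "\<lambda>x. 0" w z] by simp

lemma Coder_sub: "Coder w D p \<subseteq> EndH w p" by (auto simp: Coder_def)

lemma CoderD: "f \<in> Coder w D p \<Longrightarrow> D (f x) = tmap w p id f (D x) + tmap w 0 f id (D x)"
  by (simp add: Coder_def)

lemma Coder_zero:
  assumes D: "klinear D"
  shows "(\<lambda>x. 0) \<in> Coder w D p"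
  unfolding Coder_def using EndH_zero klinearD(3)[OF D] by (auto simp: tmap_R_zero tmap_L_zero)

lemma Coder_add:
  assumes D: "klinear D" and f: "f \<in> Coder w D p" and g: "g \<in> Coder w D p"
  shows "(\<lambda>x. f x + g x) \<in> Coder w D p"
proof -
  have "(\<lambda>x. f x + g x) \<in> EndH w p" using EndH_add f g Coder_sub by blast
  moreover have "D (f x + g x) = tmap w p id (\<lambda>x. f x + g x) (D x) + tmap w 0 (\<lambda>x. f x + g x) id (D x)" for x
    using tmap_R_gen[of "\<lambda>x. f x + g x" f 1 g w p "D x"] tmap_L_gen[of "\<lambda>x. f x + g x" f 1 g w "D x"]
      CoderD[OF f, of x] CoderD[OF g, of x] klinearD(1)[OF D]
    by (simp add: algebra_simps)
  ultimately show ?thesis by (simp add: Coder_def)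
qed

lemma Coder_scale:
  assumes D: "klinear D" and f: "f \<in> Coder w D p"
  shows "(\<lambda>x. smult c (f x)) \<in> Coder w D p"
proof -
  have "(\<lambda>x. smult c (f x)) \<in> EndH w p" using EndH_scale f Coder_sub by blast
  moreover have "D (smult c (f x)) = tmap w p id (\<lambda>x. smult c (f x)) (D x) + tmap w 0 (\<lambda>x. smult c (f x)) id (D x)" for x
    using tmap_R_gen[of "\<lambda>x. smult c (f x)" "\<lambda>x. 0" c f w p "D x"] tmap_L_gen[of "\<lambda>x. smult c (f x)" "\<lambda>x. 0" c f w "D x"]
      CoderD[OF f, of x] klinearD(2)[OF D]
    by (simp add: smult_add tmap_R_zero tmap_L_zero)
  ultimately show ?thesis by (simp add: Coder_def)
qed


lemma psign_cases: "psign a = (1::'k::field) \<or> psign a = (-1::'k)"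
  by (simp add: psign_def)

lemma Coder_bracket:
  fixes w :: "'b \<Rightarrow> int" and D :: "('b \<Rightarrow>\<^sub>0 'k::field) \<Rightarrow> ('b \<times> 'b \<Rightarrow>\<^sub>0 'k)"
  assumes D: "klinear D" and f: "f \<in> Coder w D p" and g: "g \<in> Coder w D q"
  shows "End_bracket p q f g \<in> Coder w D (p + q)"
proof -
  have fE: "f \<in> EndH w p" and gE: "g \<in> EndH w q" using f g Coder_sub by blast+
  have fl: "klinear f" and gl: "klinear g" using fE gE EndH_lin by blast+
  let ?s = "psign (p * q) :: 'k"
  have hE: "End_bracket p q f g \<in> EndH w (p + q)"
  proof -
    have "(\<lambda>x. g (f x)) \<in> EndH w (p + q)" using EndH_comp[OF gE fE] by (simp add: add.commute)
    then show ?thesis unfolding End_bracket_def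
      using EndH_diff[OF EndH_comp[OF fE gE] EndH_scale] by blast
  qed
  have eq: "D (End_bracket p q f g x) = tmap w (p + q) id (End_bracket p q f g) (D x) + tmap w 0 (End_bracket p q f g) id (D x)" for x
  proof -
    define A where "A = tmap w (p + q) id (\<lambda>x. f (g x)) (D x)"
    define A' where "A' = tmap w (p + q) id (\<lambda>x. g (f x)) (D x)"
    define B where "B = tmap w 0 (\<lambda>x. f (g x)) id (D x)"
    define B' where "B' = tmap w 0 (\<lambda>x. g (f x)) id (D x)"
    define X where "X = tmap w 0 g id (tmap w p id f (D x))"
    define Y where "Y = tmap w q id g (tmap w 0 f id (D x))"
    have 1: "D (f (g x)) = A + smult ?s X + smult ?s Y + B"
      unfolding A_def B_def X_def Y_def
      by (simp add: CoderD[OF f] CoderD[OF g] klinearD(1)[OF klinear_tmap] tmap_comp1[OF fl gl]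
          tmap_comp2[OF fE gE] tmap_comp3[OF fE gE] tmap_comp4[OF fE gE] add_ac)
    have 2: "D (g (f x)) = A' + Y + X + B'"
    proof -
      have "D (g (f x)) = tmap w (q + p) id (\<lambda>x. g (f x)) (D x) + tmap w q id g (tmap w 0 f id (D x))
          + tmap w 0 g id (tmap w p id f (D x)) + tmap w 0 (\<lambda>x. g (f x)) id (D x)"
        by (simp add: CoderD[OF f] CoderD[OF g] klinearD(1)[OF klinear_tmap] tmap_comp1[OF gl fl]
          tmap_comp2[OF gE fE] add_ac)
      then show ?thesis unfolding A'_def B'_def X_def Y_def by (simp add: add.commute)
    qed
    have 3: "tmap w (p + q) id (End_bracket p q f g) (D x) = A - smult ?s A'"
      unfolding End_bracket_def A_def A'_def
      by (rule tmap_lin2[OF klinear_comp[OF fl gl] klinear_comp[OF gl fl]])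
    have 4: "tmap w 0 (End_bracket p q f g) id (D x) = B - smult ?s B'"
      unfolding End_bracket_def B_def B'_def
      by (rule tmap_lin1[OF klinear_comp[OF fl gl] klinear_comp[OF gl fl]])
    have 5: "D (End_bracket p q f g x) = D (f (g x)) - smult ?s (D (g (f x)))"
      by (simp add: End_bracket_def klinearD[OF D])
    show ?thesis unfolding 3 4 5 1 2
      using psign_cases[of "p * q"]
      by (auto simp: smult_add smult_diff intro!: poly_mapping_eqI simp: lookup_add lookup_minus algebra_simps)
  qed
  show ?thesis using hE eq by (simp add: Coder_def)
qed


inductive_set dspan :: "(('b \<Rightarrow>\<^sub>0 'k::field) \<Rightarrow> ('b \<Rightarrow>\<^sub>0 'k)) \<Rightarrow> (('b \<Rightarrow>\<^sub>0 'k) \<Rightarrow> ('b \<Rightarrow>\<^sub>0 'k))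
    \<Rightarrow> nat \<Rightarrow> (('b \<Rightarrow>\<^sub>0 'k) \<Rightarrow> ('b \<Rightarrow>\<^sub>0 'k)) set"
  for dl f k where
  dgen: "a + b = k \<Longrightarrow> (\<lambda>x. (dl ^^ a) (f ((dl ^^ b) x))) \<in> dspan dl f k"
| dadd: "g \<in> dspan dl f k \<Longrightarrow> h \<in> dspan dl f k \<Longrightarrow> (\<lambda>x. g x + h x) \<in> dspan dl f k"
| dscale: "g \<in> dspan dl f k \<Longrightarrow> (\<lambda>x. smult c (g x)) \<in> dspan dl f k"

lemma dspan_L:
  assumes "g \<in> dspan dl f k" and dl: "klinear dl"
  shows "(\<lambda>x. dl (g x)) \<in> dspan dl f (Suc k)"
  using assms(1)
proof induction
  case (dgen a b)
  have "(\<lambda>x. (dl ^^ Suc a) (f ((dl ^^ b) x))) \<in> dspan dl f (Suc k)"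
    by (rule dspan.dgen) (use dgen in simp)
  then show ?case by simp
next
  case (dadd g h)
  then show ?case using dspan.dadd[OF dadd.IH] by (simp add: klinearD[OF dl])
next
  case (dscale g c)
  then show ?case using dspan.dscale[OF dscale.IH] by (simp add: klinearD[OF dl])
qed

lemma dspan_R:
  assumes "g \<in> dspan dl f k"
  shows "(\<lambda>x. g (dl x)) \<in> dspan dl f (Suc k)"
  using assms(1)
proof induction
  case (dgen a b)
  have "(\<lambda>x. (dl ^^ a) (f ((dl ^^ Suc b) x))) \<in> dspan dl f (Suc k)"
    by (rule dspan.dgen) (use dgen in simp)
  then show ?case by (simp add: funpow_Suc_right del: funpow.simps)
next
  case (dadd g h)
  then show ?case using dspan.dadd[OF dadd.IH] by simp
next
  case (dscale g c)
  then show ?case using dspan.dscale[OF dscale.IH] by simp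
qed

lemma diter_dspan:
  assumes dl: "klinear dl"
  shows "diter (End_d dl) k p f \<in> dspan dl f k"
proof (induction k)
  case 0
  have "(\<lambda>x. (dl ^^ 0) (f ((dl ^^ 0) x))) \<in> dspan dl f 0" by (rule dspan.dgen) simp
  then show ?case by simp
next
  case (Suc k)
  let ?g = "diter (End_d dl) k p f"
  have "(\<lambda>x. dl (?g x) + smult (- psign (p + int k)) (?g (dl x))) \<in> dspan dl f (Suc k)"
    by (rule dspan.dadd[OF dspan_L[OF Suc dl] dspan.dscale[OF dspan_R[OF Suc]]])
  moreover have "(\<lambda>x. dl (?g x) + smult (- psign (p + int k)) (?g (dl x))) = End_d dl (p + int k) ?g"
    unfolding End_d_def by (auto intro!: poly_mapping_eqI simp: lookup_add lookup_minus)
  ultimately show ?case by simp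
qed

lemma klinear_funpow:
  fixes dl :: "('b \<Rightarrow>\<^sub>0 'k::field) \<Rightarrow> ('b \<Rightarrow>\<^sub>0 'k)"
  shows "klinear dl \<Longrightarrow> klinear (dl ^^ n)"
proof (induction n)
  case 0 then show ?case by (simp add: klinear_def id_def)
next
  case (Suc n)
  have "klinear (\<lambda>x. dl ((dl ^^ n) x))" by (rule klinear_comp[OF Suc(2) Suc(1)[OF Suc(2)]])
  then show ?case by (simp add: comp_def)
qed

lemma dspan_zero:
  assumes dl: "klinear dl" and f: "klinear f" and N: "(dl ^^ N) = (\<lambda>x. 0)"
    and k: "\<And>a b. a + b = k \<Longrightarrow> N \<le> a \<or> N \<le> b"
    and g: "g \<in> dspan dl f k"
  shows "g = (\<lambda>x. 0)"
  using g
proof induction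
  case (dgen a b)
  show ?case
  proof (rule ext)
    fix x
    from k[OF dgen] show "(dl ^^ a) (f ((dl ^^ b) x)) = 0"
    proof
      assume "N \<le> a"
      then have "(dl ^^ a) = (dl ^^ (a - N)) \<circ> (dl ^^ N)" by (simp add: funpow_add[symmetric])
      then show ?thesis using N by (simp add: klinearD(3)[OF klinear_funpow[OF dl]])
    next
      assume "N \<le> b"
      then have "(dl ^^ b) = (dl ^^ N) \<circ> (dl ^^ (b - N))" by (simp add: funpow_add[symmetric])
      then show ?thesis using N by (simp add: klinearD(3)[OF klinear_funpow[OF dl]] klinearD(3)[OF f])
    qed
  qed
qed simp_all


lemma graded_space_sub:
  fixes H :: "int \<Rightarrow> (('b \<Rightarrow>\<^sub>0 'k::field) \<Rightarrow> ('b \<Rightarrow>\<^sub>0 'k)) set"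
  assumes sub: "\<And>p. H p \<subseteq> EndH w p" and z: "\<And>p. (\<lambda>x. 0) \<in> H p"
    and ad: "\<And>p a b. a \<in> H p \<Longrightarrow> b \<in> H p \<Longrightarrow> (\<lambda>x. a x + b x) \<in> H p"
    and sc: "\<And>p c a. a \<in> H p \<Longrightarrow> (\<lambda>x. smult c (a x)) \<in> H p"
  shows "graded_space End_scale H"
  unfolding graded_space_def
proof (intro conjI allI ballI impI)
  fix p show "0 \<in> H p" using z[of p] by (simp add: zero_fun_def)
  fix a b assume "a \<in> H p" "b \<in> H p"
  then show "a + b \<in> H p" using ad by (simp add: plus_fun_def)
next
  fix p c and a assume "a \<in> H p" then show "End_scale c a \<in> H p" using sc by (simp add: End_scale_def)
next
  fix p a b c c' assume "a \<in> H p" "b \<in> H p"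
  show "End_scale c (a + b) = End_scale c a + End_scale c b"
    by (simp add: End_scale_def fun_eq_iff smult_add)
  show "End_scale (c + c') a = End_scale c a + End_scale c' a"
    by (simp add: End_scale_def fun_eq_iff smult_add_left)
  show "End_scale (c * c') a = End_scale c (End_scale c' a)"
    by (simp add: End_scale_def fun_eq_iff)
  show "End_scale 1 a = a"
    by (simp add: End_scale_def fun_eq_iff)
next
  fix S and v :: "int \<Rightarrow> ('b \<Rightarrow>\<^sub>0 'k) \<Rightarrow> ('b \<Rightarrow>\<^sub>0 'k)" and p
  assume "finite S" "\<forall>p\<in>S. v p \<in> H p" "sum v S = 0" "p \<in> S"
  then show "v p = 0" using EndH_direct[of S v w p] sub by blast
qed

lemma Kdiff:
  fixes H :: "int \<Rightarrow> (('b \<Rightarrow>\<^sub>0 'k::field) \<Rightarrow> ('b \<Rightarrow>\<^sub>0 'k)) set"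
  assumes dlE: "dl \<in> EndH w 1" and N: "(dl ^^ N) = (\<lambda>x. 0)" and sub: "\<And>p. H p \<subseteq> EndH w p"
    and cl: "\<And>p a. a \<in> H p \<Longrightarrow> End_d dl p a \<in> H (p + 1)"
  shows "K_differential End_scale H (End_d dl) (2 * N - 1)"
  unfolding K_differential_def
proof (intro conjI allI ballI)
  have dl: "klinear dl" using dlE EndH_lin by blast
  fix p a assume aH: "a \<in> H p"
  then have al: "klinear a" using sub EndH_lin by blast
  show "End_d dl p a \<in> H (p + 1)" using cl aH .
  {
    fix b assume "b \<in> H p"
    then have bl: "klinear b" using sub EndH_lin by blast
    show "End_d dl p (a + b) = End_d dl p a + End_d dl p b"
      by (intro ext poly_mapping_eqI) (simp add: End_d_def klinearD[OF dl] smult_add lookup_add lookup_minus)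
  }
  fix c
  show "End_d dl p (End_scale c a) = End_scale c (End_d dl p a)"
    by (intro ext poly_mapping_eqI) (simp add: End_d_def End_scale_def klinearD[OF dl] lookup_minus algebra_simps)
  have "diter (End_d dl) (2 * N - 1) p a = (\<lambda>x. 0)"
    by (rule dspan_zero[OF dl al N _ diter_dspan[OF dl]]) arith
  then show "diter (End_d dl) (2 * N - 1) p a = 0" by (simp add: zero_fun_def)
qed


lemma End_d_EndH:
  assumes dlE: "dl \<in> EndH w 1" and aE: "a \<in> EndH w p"
  shows "End_d dl p a \<in> EndH w (p + 1)"
proof -
  have 1: "(\<lambda>x. dl (a x)) \<in> EndH w (p + 1)" using EndH_comp[OF dlE aE] by (simp add: add.commute)
  have 2: "(\<lambda>x. a (dl x)) \<in> EndH w (p + 1)" using EndH_comp[OF aE dlE] .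
  show ?thesis unfolding End_d_def using EndH_diff[OF 1 EndH_scale[OF 2]] .
qed

theorem mainTheorem4:
  fixes bdeg :: "'b \<Rightarrow> int"
    and Delta :: "('b \<Rightarrow>\<^sub>0 'k::field_char_0) \<Rightarrow> ('b \<times> 'b \<Rightarrow>\<^sub>0 'k)"
    and delta :: "('b \<Rightarrow>\<^sub>0 'k) \<Rightarrow> ('b \<Rightarrow>\<^sub>0 'k)"
    and N :: nat
  assumes "N_codifferential bdeg Delta delta N"
  shows "K_dga End_scale (EndH bdeg) (\<circ>) (End_d delta) (2 * N - 1)
       \<and> K_dgla End_scale (Coder bdeg Delta) End_bracket (End_d delta) (2 * N - 1)"
proof
  have D: "klinear Delta" and dC: "delta \<in> Coder bdeg Delta 1" and N: "(delta ^^ N) = (\<lambda>x. 0)"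
    using assms by (auto simp: N_codifferential_def graded_coalgebra_def)
  have dE: "delta \<in> EndH bdeg 1" using dC Coder_sub by blast
  have dl: "klinear delta" using dE EndH_lin by blast
  show "K_dga End_scale (EndH bdeg) (\<circ>) (End_d delta) (2 * N - 1)"
    unfolding K_dga_def
  proof (intro conjI)
    show "graded_space End_scale (EndH bdeg)"
      by (rule graded_space_sub[of _ bdeg]) (auto intro: EndH_zero EndH_add EndH_scale)
    show "K_differential End_scale (EndH bdeg) (End_d delta) (2 * N - 1)"
      by (rule Kdiff[OF dE N]) (auto intro: End_d_EndH[OF dE])
    show "\<forall>p q. \<forall>a\<in>EndH bdeg p. \<forall>b\<in>EndH bdeg q. a \<circ> b \<in> EndH bdeg (p + q)"
      using EndH_comp by (auto simp: comp_def)
    show "\<forall>p q. \<forall>a\<in>EndH bdeg p. \<forall>a'\<in>EndH bdeg p. \<forall>b\<in>EndH bdeg q. (a + a') \<circ> b = (a \<circ> b) + (a' \<circ> b)"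
      by (auto simp: fun_eq_iff)
    show "\<forall>p q. \<forall>a\<in>EndH bdeg p. \<forall>b\<in>EndH bdeg q. \<forall>b'\<in>EndH bdeg q. a \<circ> (b + b') = (a \<circ> b) + (a \<circ> b')"
      by (auto simp: fun_eq_iff klinearD[OF EndH_lin])
    show "\<forall>p q c. \<forall>a\<in>EndH bdeg p. \<forall>b\<in>EndH bdeg q.
        (End_scale c a) \<circ> b = End_scale c (a \<circ> b) \<and> a \<circ> (End_scale c b) = End_scale c (a \<circ> b)"
      by (auto simp: fun_eq_iff End_scale_def klinearD[OF EndH_lin])
    show "\<forall>p q r. \<forall>a\<in>EndH bdeg p. \<forall>b\<in>EndH bdeg q. \<forall>e\<in>EndH bdeg r. (a \<circ> b) \<circ> e = a \<circ> (b \<circ> e)"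
      by (auto simp: comp_assoc)
    show "\<forall>p q. \<forall>a\<in>EndH bdeg p. \<forall>b\<in>EndH bdeg q.
        End_d delta (p + q) (a \<circ> b) = (End_d delta p a \<circ> b) + End_scale (psign p) (a \<circ> End_d delta q b)"
    proof (intro allI ballI)
      fix p q and a b :: "('b \<Rightarrow>\<^sub>0 'k) \<Rightarrow> ('b \<Rightarrow>\<^sub>0 'k)"
      assume aE: "a \<in> EndH bdeg p" and bE: "b \<in> EndH bdeg q"
      have al: "klinear a" using aE EndH_lin by blast
      show "End_d delta (p + q) (a \<circ> b) = (End_d delta p a \<circ> b) + End_scale (psign p) (a \<circ> End_d delta q b)"
        using psign_cases[of p, where 'k='k] psign_cases[of q, where 'k='k]
        by (auto intro!: ext poly_mapping_eqI simp: End_d_def End_scale_def klinearD[OF al] psign_add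
            lookup_add lookup_minus algebra_simps)
    qed
  qed
  show "K_dgla End_scale (Coder bdeg Delta) End_bracket (End_d delta) (2 * N - 1)"
    unfolding K_dgla_def
  proof (intro conjI)
    show "graded_space End_scale (Coder bdeg Delta)"
      by (rule graded_space_sub[of _ bdeg]) (auto intro: set_mp[OF Coder_sub] Coder_zero[OF D] Coder_add[OF D] Coder_scale[OF D])
    have dd: "End_d delta p a = End_bracket 1 p delta a" for p a
      by (simp add: End_d_def End_bracket_def)
    show "K_differential End_scale (Coder bdeg Delta) (End_d delta) (2 * N - 1)"
    proof (rule Kdiff[OF dE N])
      show "\<And>p. Coder bdeg Delta p \<subseteq> EndH bdeg p" by (rule Coder_sub)
      fix p a assume "a \<in> Coder bdeg Delta p"
      then have "End_bracket 1 p delta a \<in> Coder bdeg Delta (1 + p)"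
        using Coder_bracket[OF D dC] by blast
      then show "End_d delta p a \<in> Coder bdeg Delta (p + 1)"
        by (simp add: dd add.commute)
    qed
    show "\<forall>p q. \<forall>a\<in>Coder bdeg Delta p. \<forall>b\<in>Coder bdeg Delta q. End_bracket p q a b \<in> Coder bdeg Delta (p + q)"
      using Coder_bracket[OF D] by blast
    have lin: "klinear a" if "a \<in> Coder bdeg Delta p" for a p
      using that Coder_sub EndH_lin by blast
    show "\<forall>p q. \<forall>a\<in>Coder bdeg Delta p. \<forall>a'\<in>Coder bdeg Delta p. \<forall>b\<in>Coder bdeg Delta q.
        End_bracket p q (a + a') b = End_bracket p q a b + End_bracket p q a' b"
      by (auto intro!: ext poly_mapping_eqI simp: End_bracket_def klinearD[OF lin] lookup_add lookup_minus algebra_simps)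
    show "\<forall>p q. \<forall>a\<in>Coder bdeg Delta p. \<forall>b\<in>Coder bdeg Delta q. \<forall>b'\<in>Coder bdeg Delta q.
        End_bracket p q a (b + b') = End_bracket p q a b + End_bracket p q a b'"
      by (auto intro!: ext poly_mapping_eqI simp: End_bracket_def klinearD[OF lin] lookup_add lookup_minus algebra_simps)
    show "\<forall>p q c. \<forall>a\<in>Coder bdeg Delta p. \<forall>b\<in>Coder bdeg Delta q.
        End_bracket p q (End_scale c a) b = End_scale c (End_bracket p q a b) \<and>
        End_bracket p q a (End_scale c b) = End_scale c (End_bracket p q a b)"
      by (auto intro!: ext poly_mapping_eqI simp: End_bracket_def End_scale_def klinearD[OF lin] lookup_add lookup_minus algebra_simps)
    show "\<forall>p q. \<forall>a\<in>Coder bdeg Delta p. \<forall>b\<in>Coder bdeg Delta q.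
        End_bracket p q a b = - End_scale (psign (p * q)) (End_bracket q p b a)"
    proof (intro allI ballI)
      fix p q and a b :: "('b \<Rightarrow>\<^sub>0 'k) \<Rightarrow> ('b \<Rightarrow>\<^sub>0 'k)"
      have qp: "psign (q * p) = (psign (p * q) :: 'k)" by (simp add: mult.commute)
      show "End_bracket p q a b = - End_scale (psign (p * q)) (End_bracket q p b a)"
        using psign_cases[of "p * q", where 'k='k]
        by (auto intro!: ext poly_mapping_eqI simp: End_bracket_def End_scale_def qp lookup_minus algebra_simps)
    qed
    show "\<forall>p q r. \<forall>a\<in>Coder bdeg Delta p. \<forall>b\<in>Coder bdeg Delta q. \<forall>e\<in>Coder bdeg Delta r.
        End_bracket p (q + r) a (End_bracket q r b e)
          = End_bracket (p + q) r (End_bracket p q a b) e + End_scale (psign (p * q)) (End_bracket q (p + r) b (End_bracket p r a e))"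
    proof (intro allI ballI)
      fix p q r and a b e :: "('b \<Rightarrow>\<^sub>0 'k) \<Rightarrow> ('b \<Rightarrow>\<^sub>0 'k)"
      assume aC: "a \<in> Coder bdeg Delta p" and bC: "b \<in> Coder bdeg Delta q" and eC: "e \<in> Coder bdeg Delta r"
      have al: "klinear a" and bl: "klinear b" and el: "klinear e" using aC bC eC lin by blast+
      have qp: "psign (q * p) = (psign (p * q) :: 'k)" by (simp add: mult.commute)
      show "End_bracket p (q + r) a (End_bracket q r b e)
          = End_bracket (p + q) r (End_bracket p q a b) e + End_scale (psign (p * q)) (End_bracket q (p + r) b (End_bracket p r a e))"
        using psign_cases[of "p * q", where 'k='k] psign_cases[of "p * r", where 'k='k] psign_cases[of "q * r", where 'k='k]
        by (auto intro!: ext poly_mapping_eqI simp: End_bracket_def End_scale_def klinearD[OF al] klinearD[OF bl] klinearD[OF el]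
            distrib_left distrib_right psign_add qp lookup_add lookup_minus algebra_simps)
    qed
    show "\<forall>p q. \<forall>a\<in>Coder bdeg Delta p. \<forall>b\<in>Coder bdeg Delta q.
        End_d delta (p + q) (End_bracket p q a b) = End_bracket (p + 1) q (End_d delta p a) b + End_scale (psign p) (End_bracket p (q + 1) a (End_d delta q b))"
    proof (intro allI ballI)
      fix p q and a b :: "('b \<Rightarrow>\<^sub>0 'k) \<Rightarrow> ('b \<Rightarrow>\<^sub>0 'k)"
      assume aC: "a \<in> Coder bdeg Delta p" and bC: "b \<in> Coder bdeg Delta q"
      have al: "klinear a" and bl: "klinear b" using aC bC lin by blast+
      show "End_d delta (p + q) (End_bracket p q a b) = End_bracket (p + 1) q (End_d delta p a) b + End_scale (psign p) (End_bracket p (q + 1) a (End_d delta q b))"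
        using psign_cases[of "p", where 'k='k] psign_cases[of "q", where 'k='k] psign_cases[of "p * q", where 'k='k]
        by (auto intro!: ext poly_mapping_eqI simp: End_bracket_def End_d_def End_scale_def klinearD[OF al] klinearD[OF bl] klinearD[OF dl]
            distrib_left distrib_right psign_add lookup_add lookup_minus algebra_simps)
    qed
  qed
qed

end
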